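(* The pair $(\tau_1,\tau_2)$ on $H^2_{\mathbb D^2}$ has joint spectrum $\sigma(\tau_1,\tau_2)=\overline{\mathbb D^2}$. Moreover, for every point $(\lambda_1,\lambda_2)\in\mathbb D^2$, the non-singularity of the Koszul complex of $(\tau_1-\lambda_1I,\tau_2-\lambda_2I)$ breaks at stage 2.
   Context: $H^2_{\mathbb D^2}$ is the Hardy space of the bidisc with orthonormal basis $\{z_1^{m_1}z_2^{m_2}\}_{m_1,m_2\ge0}$, and $M_{z_1},M_{z_2}$ are the coordinate multiplication operators. $U$ is the unitary on $H^2_{\mathbb D^2}$ with $U(z_1^{m_1}z_2^{m_2})=z_1^{m_1+2}z_2^{m_2}$ if $m_1\ge m_2$, $=z_1^{m_1+1}z_2^{m_2-1}$ if $m_1+1=m_2$, $=z_1^{m_1}z_2^{m_2-2}$ if $m_1+2\le m_2$; $\tau_1=U^*M_{z_1}$, $\tau_2=M_{z_2}U$. Koszul complex of commuting $T_1,T_2$ on $\mathcal H$: $0\xrightarrow{\delta_0}\mathcal H\xrightarrow{\delta_1}\mathcal H\oplus\mathcal H\xrightarrow{\delta_2}\mathcal H\xrightarrow{\delta_3}0$, $\delta_1h=(T_1h,T_2h)$, $\delta_2(h_1,h_2)=T_1h_2-T_2h_1$; the Taylor joint spectrum is the set of $(\lambda_1,\lambda_2)$ where the complex of $(T_1-\lambda_1I,T_2-\lambda_2I)$ is not exact; the non-singularity breaks at stage $n$ if $\operatorname{ran}\delta_{n-1}\neq\ker\delta_n$. *)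

theory Defs
  imports "HOL-Analysis.Analysis"
begin

text \<open>Model of the Hardy space of the bidisc: a function f is identified with its
  coefficient family (f(m1,m2)) w.r.t. the orthonormal basis z1^m1 z2^m2, so
  H^2 is the space of square-summable families indexed by nat x nat.\<close>

type_synonym vec = "nat \<times> nat \<Rightarrow> complex"

definition H2 :: "vec set" where
  "H2 = {f. (\<lambda>k. (cmod (f k))^2) summable_on UNIV}"

text \<open>Coordinate multiplications: M_z1 (z1^m1 z2^m2) = z1^(m1+1) z2^m2, etc.\<close>
definition Mz1 :: "vec \<Rightarrow> vec" where
  "Mz1 f = (\<lambda>(m1, m2). if m1 = 0 then 0 else f (m1 - 1, m2))"

definition Mz2 :: "vec \<Rightarrow> vec" where
  "Mz2 f = (\<lambda>(m1, m2). if m2 = 0 then 0 else f (m1, m2 - 1))"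

definition sigma :: "nat \<times> nat \<Rightarrow> nat \<times> nat" where
  "sigma = (\<lambda>(m1, m2). if m2 \<le> m1 then (m1 + 2, m2)
                        else if m1 + 1 = m2 then (m1 + 1, m2 - 1)
                        else (m1, m2 - 2))"

text \<open>U e_k = e_(sigma k) means (U f)(sigma k) = f k, i.e. U f = f o sigma^-1;
  its adjoint (= inverse) is f o sigma.\<close>
definition U :: "vec \<Rightarrow> vec" where
  "U f = f \<circ> inv sigma"

definition Uadj :: "vec \<Rightarrow> vec" where
  "Uadj f = f \<circ> sigma"

definition tau1 :: "vec \<Rightarrow> vec" where
  "tau1 f = Uadj (Mz1 f)"

definition tau2 :: "vec \<Rightarrow> vec" where
  "tau2 f = Mz2 (U f)"

definition shiftop :: "(vec \<Rightarrow> vec) \<Rightarrow> complex \<Rightarrow> vec \<Rightarrow> vec" where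
  "shiftop T l h = (\<lambda>k. T h k - l * h k)"

text \<open>Koszul complex  0 -d0-> H -d1-> H+H -d2-> H -d3-> 0.\<close>
definition kdelta1 :: "(vec \<Rightarrow> vec) \<Rightarrow> (vec \<Rightarrow> vec) \<Rightarrow> vec \<Rightarrow> vec \<times> vec" where
  "kdelta1 T1 T2 h = (T1 h, T2 h)"

definition kdelta2 :: "(vec \<Rightarrow> vec) \<Rightarrow> (vec \<Rightarrow> vec) \<Rightarrow> vec \<times> vec \<Rightarrow> vec" where
  "kdelta2 T1 T2 p = (\<lambda>k. T1 (snd p) k - T2 (fst p) k)"

text \<open>Non-singularity breaks at stage n iff ran delta_(n-1) \<noteq> ker delta_n.\<close>
definition koszul_breaks_at ::
  "vec set \<Rightarrow> (vec \<Rightarrow> vec) \<Rightarrow> (vec \<Rightarrow> vec) \<Rightarrow> nat \<Rightarrow> bool" where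
  "koszul_breaks_at H T1 T2 n =
     (if n = 1 then {(\<lambda>_. 0)} \<noteq> {h \<in> H. kdelta1 T1 T2 h = ((\<lambda>_. 0), (\<lambda>_. 0))}
      else if n = 2 then kdelta1 T1 T2 ` H \<noteq> {p \<in> H \<times> H. kdelta2 T1 T2 p = (\<lambda>_. 0)}
      else if n = 3 then kdelta2 T1 T2 ` (H \<times> H) \<noteq> H
      else False)"

definition koszul_exact :: "vec set \<Rightarrow> (vec \<Rightarrow> vec) \<Rightarrow> (vec \<Rightarrow> vec) \<Rightarrow> bool" where
  "koszul_exact H T1 T2 = (\<forall>n. \<not> koszul_breaks_at H T1 T2 n)"

definition taylor_spectrum ::
  "vec set \<Rightarrow> (vec \<Rightarrow> vec) \<Rightarrow> (vec \<Rightarrow> vec) \<Rightarrow> (complex \<times> complex) set" where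
  "taylor_spectrum H T1 T2 =
     {(l1, l2). \<not> koszul_exact H (shiftop T1 l1) (shiftop T2 l2)}"

end

theory Submission
  imports Defs
begin

definition sinv :: "nat \<times> nat \<Rightarrow> nat \<times> nat" where
  "sinv = (\<lambda>(a, b). if b + 2 \<le> a then (a - 2, b) else if b + 1 = a then (a - 1, a) else (a, b + 2))"

lemma sigma_sinv: "sigma (sinv p) = p"
  by (cases p) (auto simp: sigma_def sinv_def split: if_splits)

lemma sinv_sigma: "sinv (sigma p) = p"
  by (cases p) (auto simp: sigma_def sinv_def split: if_splits)

lemma inv_sigma: "inv sigma = sinv"
  by (rule inv_equality) (simp_all add: sinv_sigma sigma_sinv)

definition wsh :: "(nat \<times> nat \<Rightarrow> bool) \<Rightarrow> (nat \<times> nat \<Rightarrow> nat \<times> nat) \<Rightarrow> vec \<Rightarrow> vec" where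
  "wsh P t f = (\<lambda>p. if P p then f (t p) else 0)"

definition P1 :: "nat \<times> nat \<Rightarrow> bool" where "P1 p = (fst (sigma p) \<noteq> 0)"
definition t1 :: "nat \<times> nat \<Rightarrow> nat \<times> nat" where "t1 p = (fst (sigma p) - 1, snd (sigma p))"
definition P2 :: "nat \<times> nat \<Rightarrow> bool" where "P2 p = (snd p \<noteq> 0)"
definition t2 :: "nat \<times> nat \<Rightarrow> nat \<times> nat" where "t2 p = sinv (fst p, snd p - 1)"

lemma tau1_wsh: "tau1 = wsh P1 t1"
  by (auto simp: fun_eq_iff tau1_def Uadj_def Mz1_def wsh_def P1_def t1_def split: prod.splits)

lemma tau2_wsh: "tau2 = wsh P2 t2"
  by (auto simp: fun_eq_iff tau2_def U_def Mz2_def wsh_def P2_def t2_def inv_sigma split: prod.splits)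

lemma inj_t1: "inj_on t1 {p. P1 p}"
proof (rule inj_onI)
  fix p q assume "p \<in> {p. P1 p}" "q \<in> {p. P1 p}" "t1 p = t1 q"
  then have "sigma p = sigma q" by (auto simp: P1_def t1_def prod_eq_iff)
  then show "p = q" by (metis sinv_sigma)
qed

lemma inj_t2: "inj_on t2 {p. P2 p}"
proof (rule inj_onI)
  fix p q assume "p \<in> {p. P2 p}" "q \<in> {p. P2 p}" "t2 p = t2 q"
  then have "sinv (fst p, snd p - 1) = sinv (fst q, snd q - 1)" by (simp add: t2_def)
  then have "(fst p, snd p - 1) = (fst q, snd q - 1)" by (metis sigma_sinv)
  with \<open>p \<in> _\<close> \<open>q \<in> _\<close> show "p = q" by (auto simp: P2_def prod_eq_iff)
qed

lemma sig1: "m2 \<le> m1 \<Longrightarrow> sigma (m1, m2) = (m1 + 2, m2)" by (simp add: sigma_def)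
lemma sig2: "m2 = m1 + 1 \<Longrightarrow> sigma (m1, m2) = (m1 + 1, m1)" by (simp add: sigma_def)
lemma sig3: "m1 + 2 \<le> m2 \<Longrightarrow> sigma (m1, m2) = (m1, m2 - 2)" by (simp add: sigma_def)
lemma sinv1: "b + 2 \<le> a \<Longrightarrow> sinv (a, b) = (a - 2, b)" by (simp add: sinv_def)
lemma sinv2: "a = b + 1 \<Longrightarrow> sinv (a, b) = (b, b + 1)" by (simp add: sinv_def)
lemma sinv3: "a \<le> b \<Longrightarrow> sinv (a, b) = (a, b + 2)" by (simp add: sinv_def)

lemma P1t1_cases:
  "(m2 \<le> m1 \<and> P1 (m1, m2) \<and> t1 (m1, m2) = (m1 + 1, m2))
   \<or> (m2 = m1 + 1 \<and> P1 (m1, m2) \<and> t1 (m1, m2) = (m1, m1))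
   \<or> (m1 + 2 \<le> m2 \<and> P1 (m1, m2) = (m1 \<noteq> 0) \<and> t1 (m1, m2) = (m1 - 1, m2 - 2))"
proof -
  consider "m2 \<le> m1" | "m2 = m1 + 1" | "m1 + 2 \<le> m2" by linarith
  then show ?thesis
    by cases (simp_all add: P1_def t1_def sig1 sig2 sig3)
qed

lemma t2_cases:
  "(m2 + 1 \<le> m1 \<and> t2 (m1, m2) = (m1 - 2, m2 - 1))
   \<or> (m1 = m2 \<and> t2 (m1, m2) = (m2 - 1, m2))
   \<or> (m1 + 1 \<le> m2 \<and> t2 (m1, m2) = (m1, m2 + 1))
   \<or> m2 = 0"
proof -
  consider "m2 = 0" | "m2 \<noteq> 0 \<and> m2 + 1 \<le> m1" | "m2 \<noteq> 0 \<and> m1 = m2" | "m2 \<noteq> 0 \<and> m1 + 1 \<le> m2" by linarith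
  then show ?thesis
  proof cases
    case 2 then show ?thesis by (simp add: t2_def sinv1)
  next
    case 3 then show ?thesis using sinv2[of m1 "m2 - 1"] by (simp add: t2_def)
  next
    case 4
    then have "m1 \<le> m2 - 1" by linarith
    then show ?thesis using sinv3[of m1 "m2 - 1"] 4 by (simp add: t2_def)
  qed simp
qed

lemma P1_r1: "m2 \<le> m1 \<Longrightarrow> P1 (m1, m2)" by (simp add: P1_def sig1)
lemma t1_r1: "m2 \<le> m1 \<Longrightarrow> t1 (m1, m2) = (m1 + 1, m2)" by (simp add: t1_def sig1)
lemma P1_r2: "m2 = m1 + 1 \<Longrightarrow> P1 (m1, m2)" by (simp add: P1_def sig2)
lemma t1_r2: "m2 = m1 + 1 \<Longrightarrow> t1 (m1, m2) = (m1, m1)" by (simp add: t1_def sig2)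
lemma P1_r3: "m1 + 2 \<le> m2 \<Longrightarrow> P1 (m1, m2) = (m1 \<noteq> 0)" by (simp add: P1_def sig3)
lemma t1_r3: "m1 + 2 \<le> m2 \<Longrightarrow> t1 (m1, m2) = (m1 - 1, m2 - 2)" by (simp add: t1_def sig3)
lemma t2_r1: "m2 \<noteq> 0 \<Longrightarrow> m2 + 1 \<le> m1 \<Longrightarrow> t2 (m1, m2) = (m1 - 2, m2 - 1)"
  using sinv1[of "m2 - 1" m1] by (simp add: t2_def)
lemma t2_r2: "m2 \<noteq> 0 \<Longrightarrow> m1 = m2 \<Longrightarrow> t2 (m1, m2) = (m2 - 1, m2)"
  using sinv2[of m1 "m2 - 1"] by (simp add: t2_def)
lemma t2_r3: "m2 \<noteq> 0 \<Longrightarrow> m1 + 1 \<le> m2 \<Longrightarrow> t2 (m1, m2) = (m1, m2 + 1)"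
  using sinv3[of m1 "m2 - 1"] by (simp add: t2_def)

lemma P2_simp: "P2 (m1, m2) = (m2 \<noteq> 0)" by (simp add: P2_def)

lemma comm_both: "(P1 p \<and> P2 (t1 p)) = (P2 p \<and> P1 (t2 p)) \<and> (P1 p \<and> P2 (t1 p) \<longrightarrow> t2 (t1 p) = t1 (t2 p))"
proof -
  obtain m1 m2 where p: "p = (m1, m2)" by (cases p)
  consider "m2 = 0" | "m2 \<noteq> 0 \<and> m2 + 1 \<le> m1" | "m2 \<noteq> 0 \<and> m1 = m2" | "m2 \<noteq> 0 \<and> m2 = m1 + 1"
    | "m2 \<noteq> 0 \<and> m2 = m1 + 2" | "m2 \<noteq> 0 \<and> m1 + 3 \<le> m2" by linarith
  then show ?thesis
  proof cases
    case 1 then show ?thesis unfolding p by (simp add: P2_simp P1_r1 t1_r1)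
  next
    case 2
    then obtain b c where "m2 = Suc b" "m1 = b + 2 + c" by (metis add.commute le_add_diff_inverse not0_implies_Suc Suc_eq_plus1 add_Suc_right add_2_eq_Suc')
    then show ?thesis unfolding p by (simp add: P2_simp P1_r1 t1_r1 t2_r1)
  next
    case 3
    then obtain b where "m2 = Suc b" "m1 = Suc b" by (metis not0_implies_Suc)
    then show ?thesis unfolding p by (simp add: P2_simp P1_r1 t1_r1 t2_r1 t2_r2 P1_r2 t1_r2)
  next
    case 4
    then obtain b where "m2 = Suc b" "m1 = b" by simp
    then show ?thesis unfolding p
      by (cases b) (simp_all add: P2_simp P1_r2 t1_r2 t2_r3 t2_r2 P1_r3 t1_r3)
  next
    case 5
    then show ?thesis unfolding p
      by (cases m1) (simp_all add: P2_simp P1_r3 t1_r3 t2_r3)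
  next
    case 6
    then obtain c where "m2 = m1 + 3 + c" by (metis le_add_diff_inverse)
    then show ?thesis unfolding p
      by (cases m1) (simp_all add: P2_simp P1_r3 t1_r3 t2_r3)
  qed
qed

lemma comm_P: "(P1 p \<and> P2 (t1 p)) = (P2 p \<and> P1 (t2 p))"
  using comm_both by blast

lemma comm_t: "P1 p \<Longrightarrow> P2 (t1 p) \<Longrightarrow> t2 (t1 p) = t1 (t2 p)"
  using comm_both by blast

lemma tau_comm: "tau1 (tau2 f) = tau2 (tau1 f)"
proof
  fix p
  show "tau1 (tau2 f) p = tau2 (tau1 f) p"
  proof (cases "P1 p \<and> P2 (t1 p)")
    case True
    then show ?thesis using comm_P[of p] comm_t[of p] by (simp add: tau1_wsh tau2_wsh wsh_def)
  next
    case False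
    then show ?thesis using comm_P[of p] by (auto simp add: tau1_wsh tau2_wsh wsh_def)
  qed
qed


definition nrm :: "vec \<Rightarrow> real" where
  "nrm f = infsum (\<lambda>k. (cmod (f k))^2) UNIV"

lemma H2_sum_le: "f \<in> H2 \<Longrightarrow> finite F \<Longrightarrow> (\<Sum>k\<in>F. (cmod (f k))^2) \<le> nrm f"
  unfolding H2_def nrm_def by (intro finite_sum_le_infsum) auto

lemma H2_point: "f \<in> H2 \<Longrightarrow> (cmod (f k))^2 \<le> nrm f"
  using H2_sum_le[of f "{k}"] by simp

lemma H2_point': "f \<in> H2 \<Longrightarrow> cmod (f k) \<le> sqrt (nrm f)"
  using H2_point real_le_rsqrt by blast

lemma H2I: "(\<And>F. finite F \<Longrightarrow> (\<Sum>k\<in>F. (cmod (f k))^2) \<le> B) \<Longrightarrow> f \<in> H2"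
  unfolding H2_def mem_Collect_eq by (rule nonneg_bdd_above_summable_on) (auto intro!: bdd_aboveI[of _ B])

lemma nrm_nonneg: "0 \<le> nrm f"
  by (simp add: nrm_def infsum_nonneg)

lemma sq_sum_le: "((x::real) + y)^2 \<le> 2 * x^2 + 2 * y^2"
proof -
  have "2 * x^2 + 2 * y^2 - (x + y)^2 = (x - y)^2" by (simp add: power2_eq_square algebra_simps)
  moreover have "0 \<le> (x - y)^2" by simp
  ultimately show ?thesis by linarith
qed

lemma sq_diff_le: "(cmod (a - b))^2 \<le> 2 * (cmod a)^2 + 2 * (cmod b)^2"
proof -
  have "cmod (a - b) \<le> cmod a + cmod b" by (rule norm_triangle_ineq4)
  then have "(cmod (a - b))^2 \<le> (cmod a + cmod b)^2" by (simp add: power_mono)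
  also have "\<dots> \<le> 2 * (cmod a)^2 + 2 * (cmod b)^2"
    by (rule sq_sum_le)
  finally show ?thesis .
qed

lemma H2_diff: assumes "f \<in> H2" "g \<in> H2" shows "(\<lambda>k. f k - g k) \<in> H2"
proof (rule H2I[where B = "2 * nrm f + 2 * nrm g"])
  fix F :: "(nat \<times> nat) set" assume F: "finite F"
  have "(\<Sum>k\<in>F. (cmod (f k - g k))^2) \<le> (\<Sum>k\<in>F. 2 * (cmod (f k))^2 + 2 * (cmod (g k))^2)"
    by (intro sum_mono sq_diff_le)
  also have "\<dots> = 2 * (\<Sum>k\<in>F. (cmod (f k))^2) + 2 * (\<Sum>k\<in>F. (cmod (g k))^2)"
    by (simp add: sum.distrib sum_distrib_left)
  also have "\<dots> \<le> 2 * nrm f + 2 * nrm g"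
    using H2_sum_le[OF assms(1) F] H2_sum_le[OF assms(2) F] by simp
  finally show "(\<Sum>k\<in>F. (cmod (f k - g k))^2) \<le> 2 * nrm f + 2 * nrm g" .
qed

lemma H2_scale: assumes "f \<in> H2" shows "(\<lambda>k. c * f k) \<in> H2"
proof (rule H2I[where B = "(cmod c)^2 * nrm f"])
  fix F :: "(nat \<times> nat) set" assume F: "finite F"
  have "(\<Sum>k\<in>F. (cmod (c * f k))^2) = (cmod c)^2 * (\<Sum>k\<in>F. (cmod (f k))^2)"
    by (simp add: norm_mult power_mult_distrib sum_distrib_left)
  also have "\<dots> \<le> (cmod c)^2 * nrm f"
    using H2_sum_le[OF assms F] by (simp add: mult_left_mono)
  finally show "(\<Sum>k\<in>F. (cmod (c * f k))^2) \<le> (cmod c)^2 * nrm f" .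
qed

lemma H2_zero: "(\<lambda>_. 0) \<in> H2"
  by (rule H2I[where B = 0]) simp

lemma wsh_sum:
  assumes inj: "inj_on t {p. P p}" and F: "finite F"
  shows "(\<Sum>p\<in>F. (cmod (wsh P t f p))^2) = (\<Sum>q\<in>t ` {p \<in> F. P p}. (cmod (f q))^2)"
proof -
  have "(\<Sum>p\<in>F. (cmod (wsh P t f p))^2) = (\<Sum>p\<in>F. if P p then (cmod (f (t p)))^2 else 0)"
    by (intro sum.cong) (auto simp: wsh_def)
  also have "\<dots> = (\<Sum>p\<in>{p \<in> F. P p}. (cmod (f (t p)))^2)"
    using F by (simp add: sum.inter_filter)
  also have "\<dots> = (\<Sum>q\<in>t ` {p \<in> F. P p}. (cmod (f q))^2)"
    by (subst sum.reindex) (auto intro: inj_on_subset[OF inj])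
  finally show ?thesis .
qed

lemma wsh_sum_le:
  assumes inj: "inj_on t {p. P p}" and F: "finite F" and f: "f \<in> H2"
  shows "(\<Sum>p\<in>F. (cmod (wsh P t f p))^2) \<le> nrm f"
  using wsh_sum[OF inj F] H2_sum_le[OF f] F by simp

lemma wsh_H2: "inj_on t {p. P p} \<Longrightarrow> f \<in> H2 \<Longrightarrow> wsh P t f \<in> H2"
  by (rule H2I[where B = "nrm f"]) (rule wsh_sum_le)

lemma wsh_lin: "wsh P t (\<lambda>k. f k - c * g k) = (\<lambda>k. wsh P t f k - c * wsh P t g k)"
  by (auto simp: wsh_def fun_eq_iff)

lemma wsh_zero: "wsh P t (\<lambda>_. 0) = (\<lambda>_. 0)"
  by (auto simp: wsh_def fun_eq_iff)

lemma shiftop_H2: "inj_on t {p. P p} \<Longrightarrow> f \<in> H2 \<Longrightarrow> shiftop (wsh P t) l f \<in> H2"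
  unfolding shiftop_def by (intro H2_diff wsh_H2 H2_scale)

lemma wsh_inj0:
  assumes l: "1 < cmod l" and h: "h \<in> H2" and eq: "\<And>p. wsh P t h p = l * h p"
  shows "h = (\<lambda>_. 0)"
proof
  fix p
  define B where "B = sqrt (nrm h)"
  have l0: "l \<noteq> 0" using l by auto
  have bound: "cmod (h p) \<le> B / cmod l ^ n" for n p
  proof (induction n arbitrary: p)
    case 0 then show ?case using H2_point'[OF h] by (simp add: B_def)
  next
    case (Suc n)
    have "cmod (wsh P t h p) \<le> B / cmod l ^ n"
      using Suc.IH[of "t p"] nrm_nonneg[of h] by (auto simp: wsh_def B_def)
    then have "cmod l * cmod (h p) \<le> B / cmod l ^ n" using eq[of p] by (simp add: norm_mult)
    then have "cmod (h p) * cmod l \<le> B / cmod l ^ n" by (simp add: mult.commute)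
    moreover have c0: "0 < cmod l" using l by linarith
    ultimately have "cmod (h p) \<le> (B / cmod l ^ n) / cmod l"
      using pos_le_divide_eq[OF c0] by blast
    then show ?case by (metis divide_divide_eq_left mult.commute power_Suc)
  qed
  have "(\<lambda>n. B / cmod l ^ n) \<longlonglongrightarrow> 0" by (rule LIMSEQ_divide_realpow_zero[OF l])
  then have "cmod (h p) \<le> 0" by (rule LIMSEQ_le_const) (use bound in auto)
  then show "h p = 0" by simp
qed

lemma shiftop_wsh_inj:
  assumes l: "1 < cmod l" and h1: "h1 \<in> H2" and h2: "h2 \<in> H2"
    and eq: "shiftop (wsh P t) l h1 = shiftop (wsh P t) l h2"
  shows "h1 = h2"
proof -
  have hd: "(\<lambda>k. h1 k - h2 k) \<in> H2" by (rule H2_diff[OF h1 h2])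
  have "\<And>p. wsh P t (\<lambda>k. h1 k - h2 k) p = l * (h1 p - h2 p)"
  proof -
    fix p
    have "wsh P t h1 p - l * h1 p = wsh P t h2 p - l * h2 p" using fun_cong[OF eq, of p] by (simp add: shiftop_def)
    then show "wsh P t (\<lambda>k. h1 k - h2 k) p = l * (h1 p - h2 p)"
      by (simp add: wsh_def algebra_simps split: if_splits)
  qed
  then have "(\<lambda>k. h1 k - h2 k) = (\<lambda>_. 0)" using wsh_inj0[OF l hd] by blast
  then show ?thesis by (simp add: fun_eq_iff)
qed


lemma wsh_surj:
  assumes inj: "inj_on t {p. P p}" and l: "1 < cmod l" and g: "g \<in> H2"
  shows "\<exists>h\<in>H2. shiftop (wsh P t) l h = g"
proof -
  define T where "T = wsh P t"
  define it where "it n = (T ^^ n) g" for n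
  have it_Suc: "it (Suc n) = T (it n)" for n by (simp add: it_def)
  have it_sum: "finite F \<Longrightarrow> (\<Sum>p\<in>F. (cmod (it n p))^2) \<le> nrm g" for n F
  proof (induction n arbitrary: F)
    case 0 then show ?case using H2_sum_le[OF g] by (simp add: it_def)
  next
    case (Suc n)
    have "(\<Sum>p\<in>F. (cmod (it (Suc n) p))^2) = (\<Sum>q\<in>t ` {p \<in> F. P p}. (cmod (it n q))^2)"
      unfolding it_Suc T_def by (rule wsh_sum[OF inj Suc.prems])
    also have "\<dots> \<le> nrm g" using Suc.IH Suc.prems by simp
    finally show ?case .
  qed
  define B where "B = sqrt (nrm g)"
  have B0: "0 \<le> B" using nrm_nonneg by (simp add: B_def)
  have itb: "cmod (it n p) \<le> B" for n p
    using it_sum[of "{p}" n] unfolding B_def by (intro real_le_rsqrt) simp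
  define r where "r = 1 / cmod l"
  have r0: "0 < r" using l by (auto simp: r_def)
  have r1: "r < 1" using l by (simp add: r_def divide_less_eq)
  have l0: "l \<noteq> 0" using l by auto
  have nq: "cmod ((1/l)^Suc n * x) = r^Suc n * cmod x" for n x
    by (simp add: norm_mult norm_power norm_divide r_def)
  have nb: "cmod ((1/l)^Suc n * it n p) \<le> B * r^Suc n" for n p
    unfolding nq using itb[of n p] r0 by (simp add: mult.commute mult_left_mono)
  have sg: "summable (\<lambda>n. r^n)" by (rule summable_geometric) (use r0 r1 in auto)
  have sr: "summable (\<lambda>n. r^Suc n)" using summable_mult[OF sg, of r] by simp
  have sB: "summable (\<lambda>n. B * r^Suc n)" using summable_mult[OF sr, of B] by simp
  have summ: "summable (\<lambda>n. (1/l)^Suc n * it n p)" for p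
    by (rule summable_comparison_test'[OF sB nb])
  define h where "h p = - (\<Sum>n. (1/l)^Suc n * it n p)" for p
  have eq: "shiftop T l h = g"
  proof
    fix p
    have Th: "T h p = - (\<Sum>n. (1/l)^Suc n * it (Suc n) p)"
    proof (cases "P p")
      case True
      then show ?thesis by (simp add: T_def wsh_def h_def it_Suc)
    next
      case False
      then show ?thesis by (simp add: T_def wsh_def it_Suc)
    qed
    have fe: "(\<lambda>n. l * ((1/l)^Suc n * it n p)) = (\<lambda>n. (1/l)^n * it n p)"
      using l0 by (auto simp: fun_eq_iff)
    have s0: "summable (\<lambda>n. (1/l)^n * it n p)"
      using summable_mult[OF summ[of p], of l] unfolding fe .
    have lh: "l * h p = - (\<Sum>n. (1/l)^n * it n p)"
    proof -
      have "l * h p = - (\<Sum>n. l * ((1/l)^Suc n * it n p))"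
        unfolding h_def using suminf_mult[OF summ[of p], of l] by simp
      then show ?thesis unfolding fe .
    qed
    have "(\<Sum>n. (1/l)^n * it n p) = it 0 p + (\<Sum>n. (1/l)^Suc n * it (Suc n) p)"
      using suminf_split_head[OF s0] by simp
    then show "shiftop T l h p = g p" using Th lh by (simp add: shiftop_def it_def)
  qed
  define K where "K = (\<Sum>n. r^Suc n)"
  have hH2: "h \<in> H2"
  proof (rule H2I[where B = "(B * K)^2"])
    fix F :: "(nat \<times> nat) set" assume F: "finite F"
    define hN where "hN N p = (\<Sum>n<N. (1/l)^Suc n * it n p)" for N p
    have itL: "L2_set (\<lambda>p. cmod (it N p)) F \<le> B" for N
      unfolding L2_set_def B_def using it_sum[OF F] by (simp add: real_sqrt_le_mono)
    have L2b: "L2_set (\<lambda>p. cmod (hN N p)) F \<le> B * (\<Sum>n<N. r^Suc n)" for N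
    proof (induction N)
      case 0 then show ?case by (simp add: hN_def L2_set_def)
    next
      case (Suc N)
      have "L2_set (\<lambda>p. cmod (hN (Suc N) p)) F \<le> L2_set (\<lambda>p. cmod (hN N p) + r^Suc N * cmod (it N p)) F"
      proof (rule L2_set_mono)
        fix p
        have "hN (Suc N) p = hN N p + (1/l)^Suc N * it N p" by (simp add: hN_def)
        then have "cmod (hN (Suc N) p) \<le> cmod (hN N p) + cmod ((1/l)^Suc N * it N p)"
          by (simp add: norm_triangle_ineq)
        then show "cmod (hN (Suc N) p) \<le> cmod (hN N p) + r^Suc N * cmod (it N p)" unfolding nq .
      qed simp
      also have "\<dots> \<le> L2_set (\<lambda>p. cmod (hN N p)) F + L2_set (\<lambda>p. r^Suc N * cmod (it N p)) F"
        by (rule L2_set_triangle_ineq)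
      also have "L2_set (\<lambda>p. r^Suc N * cmod (it N p)) F = r^Suc N * L2_set (\<lambda>p. cmod (it N p)) F"
        using r0 by (simp add: L2_set_right_distrib)
      also have "\<dots> \<le> r^Suc N * B" using itL[of N] r0 by (simp add: mult_left_mono)
      finally have "L2_set (\<lambda>p. cmod (hN (Suc N) p)) F \<le> L2_set (\<lambda>p. cmod (hN N p)) F + r^Suc N * B"
        by simp
      then show ?case using Suc.IH by (simp add: algebra_simps)
    qed
    have psum: "(\<Sum>n<N. r^Suc n) \<le> K" for N
      unfolding K_def by (rule sum_le_suminf[OF sr]) (use r0 in auto)
    have sqb: "(\<Sum>p\<in>F. (cmod (hN N p))^2) \<le> (B*K)^2" for N
    proof -
      have "(\<Sum>p\<in>F. (cmod (hN N p))^2) = (L2_set (\<lambda>p. cmod (hN N p)) F)^2"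
        by (simp add: L2_set_def sum_nonneg)
      also have "\<dots> \<le> (B*K)^2"
      proof (rule power_mono)
        show "L2_set (\<lambda>p. cmod (hN N p)) F \<le> B * K"
          using L2b[of N] mult_left_mono[OF psum[of N] B0] by linarith
      qed (simp add: L2_set_nonneg)
      finally show ?thesis .
    qed
    have "(\<lambda>N. hN N p) \<longlonglongrightarrow> - h p" for p
      using summable_LIMSEQ[OF summ[of p]] by (simp add: hN_def h_def)
    then have lim: "(\<lambda>N. (\<Sum>p\<in>F. (cmod (hN N p))^2)) \<longlonglongrightarrow> (\<Sum>p\<in>F. (cmod (- h p))^2)"
      by (intro tendsto_sum tendsto_power tendsto_norm) auto
    show "(\<Sum>p\<in>F. (cmod (h p))^2) \<le> (B*K)^2"
      using LIMSEQ_le_const2[OF lim] sqb by auto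
  qed
  show ?thesis using hH2 eq unfolding T_def by blast
qed


lemma exact_A:
  assumes HA: "\<And>h. h \<in> H2 \<Longrightarrow> A h \<in> H2" and HB: "\<And>h. h \<in> H2 \<Longrightarrow> B h \<in> H2"
    and comm: "\<And>h. A (B h) = B (A h)" and A0: "A (\<lambda>_. 0) = (\<lambda>_. 0)" and B0: "B (\<lambda>_. 0) = (\<lambda>_. 0)"
    and injA: "\<And>h1 h2. h1 \<in> H2 \<Longrightarrow> h2 \<in> H2 \<Longrightarrow> A h1 = A h2 \<Longrightarrow> h1 = h2"
    and surjA: "\<And>g. g \<in> H2 \<Longrightarrow> \<exists>h\<in>H2. A h = g"
  shows "koszul_exact H2 A B"
proof -
  have s1: "{h \<in> H2. kdelta1 A B h = ((\<lambda>_. 0), (\<lambda>_. 0))} = {(\<lambda>_. 0)}"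
  proof
    show "{h \<in> H2. kdelta1 A B h = ((\<lambda>_. 0), (\<lambda>_. 0))} \<subseteq> {(\<lambda>_. 0)}"
    proof
      fix h assume "h \<in> {h \<in> H2. kdelta1 A B h = ((\<lambda>_. 0), (\<lambda>_. 0))}"
      then have "h \<in> H2" "A h = A (\<lambda>_. 0)" by (auto simp: kdelta1_def A0)
      then have "h = (\<lambda>_. 0)" using injA H2_zero by blast
      then show "h \<in> {(\<lambda>_. 0)}" by simp
    qed
    show "{(\<lambda>_. 0)} \<subseteq> {h \<in> H2. kdelta1 A B h = ((\<lambda>_. 0), (\<lambda>_. 0))}"
      using H2_zero A0 B0 by (auto simp: kdelta1_def)
  qed
  have s2: "kdelta1 A B ` H2 = {p \<in> H2 \<times> H2. kdelta2 A B p = (\<lambda>_. 0)}"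
  proof
    show "kdelta1 A B ` H2 \<subseteq> {p \<in> H2 \<times> H2. kdelta2 A B p = (\<lambda>_. 0)}"
    proof
      fix p assume "p \<in> kdelta1 A B ` H2"
      then obtain h where h: "h \<in> H2" "p = (A h, B h)" by (auto simp: kdelta1_def)
      have "kdelta2 A B p = (\<lambda>_. 0)" using h(2) comm[of h] by (simp add: kdelta2_def)
      then show "p \<in> {p \<in> H2 \<times> H2. kdelta2 A B p = (\<lambda>_. 0)}" using h HA HB by simp
    qed
    show "{p \<in> H2 \<times> H2. kdelta2 A B p = (\<lambda>_. 0)} \<subseteq> kdelta1 A B ` H2"
    proof
      fix p assume p: "p \<in> {p \<in> H2 \<times> H2. kdelta2 A B p = (\<lambda>_. 0)}"
      obtain p1 p2 where pp: "p = (p1, p2)" by (cases p)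
      have p1: "p1 \<in> H2" and p2: "p2 \<in> H2" and e: "A p2 = B p1"
        using p unfolding pp by (auto simp: kdelta2_def fun_eq_iff)
      obtain h where h: "h \<in> H2" "A h = p1" using surjA[OF p1] by blast
      have "A (B h) = A p2" using comm[of h] h e by simp
      then have "B h = p2" using injA[OF HB[OF h(1)] p2] by blast
      then show "p \<in> kdelta1 A B ` H2" using h unfolding pp kdelta1_def by blast
    qed
  qed
  have s3: "kdelta2 A B ` (H2 \<times> H2) = H2"
  proof
    show "kdelta2 A B ` (H2 \<times> H2) \<subseteq> H2"
    proof
      fix g assume "g \<in> kdelta2 A B ` (H2 \<times> H2)"
      then obtain p1 p2 where p: "p1 \<in> H2" "p2 \<in> H2" "g = kdelta2 A B (p1, p2)" by auto
      show "g \<in> H2" unfolding p(3) kdelta2_def using H2_diff[OF HA[OF p(2)] HB[OF p(1)]] by simp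
    qed
    show "H2 \<subseteq> kdelta2 A B ` (H2 \<times> H2)"
    proof
      fix g assume g: "g \<in> H2"
      obtain h where h: "h \<in> H2" "A h = g" using surjA[OF g] by blast
      have "kdelta2 A B ((\<lambda>_. 0), h) = g" using h B0 by (simp add: kdelta2_def)
      moreover have "((\<lambda>_. 0), h) \<in> H2 \<times> H2" using h H2_zero by simp
      ultimately show "g \<in> kdelta2 A B ` (H2 \<times> H2)" by (metis rev_image_eqI)
    qed
  qed
  show ?thesis unfolding koszul_exact_def
  proof
    fix n show "\<not> koszul_breaks_at H2 A B n"
      unfolding koszul_breaks_at_def using s1 s2 s3 by simp
  qed
qed

lemma exact_B:
  assumes HA: "\<And>h. h \<in> H2 \<Longrightarrow> A h \<in> H2" and HB: "\<And>h. h \<in> H2 \<Longrightarrow> B h \<in> H2"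
    and comm: "\<And>h. A (B h) = B (A h)" and A0: "A (\<lambda>_. 0) = (\<lambda>_. 0)" and B0: "B (\<lambda>_. 0) = (\<lambda>_. 0)"
    and injB: "\<And>h1 h2. h1 \<in> H2 \<Longrightarrow> h2 \<in> H2 \<Longrightarrow> B h1 = B h2 \<Longrightarrow> h1 = h2"
    and surjB: "\<And>g. g \<in> H2 \<Longrightarrow> \<exists>h\<in>H2. B h = g"
  shows "koszul_exact H2 A B"
proof -
  have s1: "{h \<in> H2. kdelta1 A B h = ((\<lambda>_. 0), (\<lambda>_. 0))} = {(\<lambda>_. 0)}"
  proof
    show "{h \<in> H2. kdelta1 A B h = ((\<lambda>_. 0), (\<lambda>_. 0))} \<subseteq> {(\<lambda>_. 0)}"
    proof
      fix h assume "h \<in> {h \<in> H2. kdelta1 A B h = ((\<lambda>_. 0), (\<lambda>_. 0))}"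
      then have "h \<in> H2" "B h = B (\<lambda>_. 0)" by (auto simp: kdelta1_def B0)
      then have "h = (\<lambda>_. 0)" using injB H2_zero by blast
      then show "h \<in> {(\<lambda>_. 0)}" by simp
    qed
    show "{(\<lambda>_. 0)} \<subseteq> {h \<in> H2. kdelta1 A B h = ((\<lambda>_. 0), (\<lambda>_. 0))}"
      using H2_zero A0 B0 by (auto simp: kdelta1_def)
  qed
  have s2: "kdelta1 A B ` H2 = {p \<in> H2 \<times> H2. kdelta2 A B p = (\<lambda>_. 0)}"
  proof
    show "kdelta1 A B ` H2 \<subseteq> {p \<in> H2 \<times> H2. kdelta2 A B p = (\<lambda>_. 0)}"
    proof
      fix p assume "p \<in> kdelta1 A B ` H2"
      then obtain h where h: "h \<in> H2" "p = (A h, B h)" by (auto simp: kdelta1_def)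
      have "kdelta2 A B p = (\<lambda>_. 0)" using h(2) comm[of h] by (simp add: kdelta2_def)
      then show "p \<in> {p \<in> H2 \<times> H2. kdelta2 A B p = (\<lambda>_. 0)}" using h HA HB by simp
    qed
    show "{p \<in> H2 \<times> H2. kdelta2 A B p = (\<lambda>_. 0)} \<subseteq> kdelta1 A B ` H2"
    proof
      fix p assume p: "p \<in> {p \<in> H2 \<times> H2. kdelta2 A B p = (\<lambda>_. 0)}"
      obtain p1 p2 where pp: "p = (p1, p2)" by (cases p)
      have p1: "p1 \<in> H2" and p2: "p2 \<in> H2" and e: "A p2 = B p1"
        using p unfolding pp by (auto simp: kdelta2_def fun_eq_iff)
      obtain h where h: "h \<in> H2" "B h = p2" using surjB[OF p2] by blast
      have "B (A h) = B p1" using comm[of h] h e by simp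
      then have "A h = p1" using injB[OF HA[OF h(1)] p1] by blast
      then show "p \<in> kdelta1 A B ` H2" using h unfolding pp kdelta1_def by blast
    qed
  qed
  have s3: "kdelta2 A B ` (H2 \<times> H2) = H2"
  proof
    show "kdelta2 A B ` (H2 \<times> H2) \<subseteq> H2"
    proof
      fix g assume "g \<in> kdelta2 A B ` (H2 \<times> H2)"
      then obtain p1 p2 where p: "p1 \<in> H2" "p2 \<in> H2" "g = kdelta2 A B (p1, p2)" by auto
      show "g \<in> H2" unfolding p(3) kdelta2_def using H2_diff[OF HA[OF p(2)] HB[OF p(1)]] by simp
    qed
    show "H2 \<subseteq> kdelta2 A B ` (H2 \<times> H2)"
    proof
      fix g assume g: "g \<in> H2"
      have g': "(\<lambda>k. (-1) * g k) \<in> H2" by (rule H2_scale[OF g])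
      obtain h where h: "h \<in> H2" "B h = (\<lambda>k. (-1) * g k)" using surjB[OF g'] by blast
      have "kdelta2 A B (h, (\<lambda>_. 0)) = g" using h A0 by (simp add: kdelta2_def)
      moreover have "(h, (\<lambda>_. 0)) \<in> H2 \<times> H2" using h H2_zero by simp
      ultimately show "g \<in> kdelta2 A B ` (H2 \<times> H2)" by (metis rev_image_eqI)
    qed
  qed
  show ?thesis unfolding koszul_exact_def
  proof
    fix n show "\<not> koszul_breaks_at H2 A B n"
      unfolding koszul_breaks_at_def using s1 s2 s3 by simp
  qed
qed

lemma shift_comm: "shiftop tau1 l1 (shiftop tau2 l2 h) = shiftop tau2 l2 (shiftop tau1 l1 h)"
proof -
  have a: "tau1 (shiftop tau2 l2 h) = (\<lambda>k. tau1 (tau2 h) k - l2 * tau1 h k)"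
    unfolding shiftop_def tau1_wsh by (rule wsh_lin)
  have b: "tau2 (shiftop tau1 l1 h) = (\<lambda>k. tau2 (tau1 h) k - l1 * tau2 h k)"
    unfolding shiftop_def tau2_wsh by (rule wsh_lin)
  show ?thesis unfolding shiftop_def
    using a b tau_comm[of h] unfolding shiftop_def by (simp add: fun_eq_iff algebra_simps)
qed

lemma shift0: "shiftop (wsh P t) l (\<lambda>_. 0) = (\<lambda>_. 0)"
  by (simp add: shiftop_def wsh_zero)

lemma exterior:
  assumes "1 < cmod l1 \<or> 1 < cmod l2"
  shows "koszul_exact H2 (shiftop tau1 l1) (shiftop tau2 l2)"
  using assms
proof
  assume l: "1 < cmod l1"
  show ?thesis
  proof (rule exact_A)
    show "\<And>h1 h2. h1 \<in> H2 \<Longrightarrow> h2 \<in> H2 \<Longrightarrow> shiftop tau1 l1 h1 = shiftop tau1 l1 h2 \<Longrightarrow> h1 = h2"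
      unfolding tau1_wsh using shiftop_wsh_inj[OF l] by blast
    show "\<And>g. g \<in> H2 \<Longrightarrow> \<exists>h\<in>H2. shiftop tau1 l1 h = g"
      unfolding tau1_wsh using wsh_surj[OF inj_t1 l] by blast
  qed (simp_all add: shift_comm[unfolded tau1_wsh tau2_wsh] tau1_wsh tau2_wsh shift0 shiftop_H2 inj_t1 inj_t2)
next
  assume l: "1 < cmod l2"
  show ?thesis
  proof (rule exact_B)
    show "\<And>h1 h2. h1 \<in> H2 \<Longrightarrow> h2 \<in> H2 \<Longrightarrow> shiftop tau2 l2 h1 = shiftop tau2 l2 h2 \<Longrightarrow> h1 = h2"
      unfolding tau2_wsh using shiftop_wsh_inj[OF l] by blast
    show "\<And>g. g \<in> H2 \<Longrightarrow> \<exists>h\<in>H2. shiftop tau2 l2 h = g"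
      unfolding tau2_wsh using wsh_surj[OF inj_t2 l] by blast
  qed (simp_all add: shift_comm[unfolded tau1_wsh tau2_wsh] tau1_wsh tau2_wsh shift0 shiftop_H2 inj_t1 inj_t2)
qed


lemma tau1_val: "tau1 f (m1, m2) = (if m2 \<le> m1 then f (m1 + 1, m2) else if m2 = m1 + 1 then f (m1, m1)
   else if m1 = 0 then 0 else f (m1 - 1, m2 - 2))"
proof -
  consider "m2 \<le> m1" | "m2 = m1 + 1" | "m1 + 2 \<le> m2" by linarith
  then show ?thesis
    by cases (simp_all add: tau1_wsh wsh_def P1_r1 t1_r1 P1_r2 t1_r2 P1_r3 t1_r3)
qed

lemma tau2_val: "tau2 f (m1, m2) = (if m2 = 0 then 0 else if m2 + 1 \<le> m1 then f (m1 - 2, m2 - 1)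
   else if m1 = m2 then f (m2 - 1, m2) else f (m1, m2 + 1))"
proof -
  consider "m2 = 0" | "m2 \<noteq> 0 \<and> m2 + 1 \<le> m1" | "m2 \<noteq> 0 \<and> m1 = m2" | "m2 \<noteq> 0 \<and> m1 + 1 \<le> m2" by linarith
  then show ?thesis
    by cases (simp_all add: tau2_wsh wsh_def P2_simp t2_r1 t2_r2 t2_r3)
qed

lemma H2_seq:
  assumes inj: "inj \<phi>" and sa: "summable (\<lambda>j. (cmod (a j))^2)"
    and z: "\<And>p. p \<notin> range \<phi> \<Longrightarrow> f p = 0" and v: "\<And>j. f (\<phi> j) = a j"
  shows "f \<in> H2"
proof (rule H2I[where B = "\<Sum>j. (cmod (a j))^2"])
  fix F :: "(nat \<times> nat) set" assume F: "finite F"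
  have "(\<Sum>p\<in>F. (cmod (f p))^2) = (\<Sum>p\<in>F \<inter> range \<phi>. (cmod (f p))^2)"
    using F z by (intro sum.mono_neutral_right) auto
  also have "F \<inter> range \<phi> = \<phi> ` (\<phi> -` F)" by auto
  also have "(\<Sum>p\<in>\<phi> ` (\<phi> -` F). (cmod (f p))^2) = (\<Sum>j\<in>\<phi> -` F. (cmod (a j))^2)"
    using inj by (subst sum.reindex) (auto simp: v intro: inj_on_subset)
  also have "\<dots> \<le> (\<Sum>j. (cmod (a j))^2)"
    using F inj by (intro sum_le_suminf[OF sa]) (auto intro: finite_vimageI)
  finally show "(\<Sum>p\<in>F. (cmod (f p))^2) \<le> (\<Sum>j. (cmod (a j))^2)" .
qed

lemma geo_sq_summable: "cmod (l::complex) < 1 \<Longrightarrow> summable (\<lambda>j. (cmod (l ^ j))^2)"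
proof -
  assume l: "cmod l < 1"
  have "(\<lambda>j. (cmod (l ^ j))^2) = (\<lambda>j. ((cmod l)^2) ^ j)" by (simp add: norm_power power_mult[symmetric] mult.commute)
  moreover have "summable (\<lambda>j. ((cmod l)^2) ^ j)"
    using l by (intro summable_geometric) (simp add: abs_square_less_1)
  ultimately show ?thesis by simp
qed

lemma interior_break:
  assumes l1: "cmod l1 < 1" and l2: "cmod l2 < 1"
  shows "koszul_breaks_at H2 (shiftop tau1 l1) (shiftop tau2 l2) 2"
proof -
  define x2 :: vec where "x2 p = (if snd p = 0 then l1 ^ fst p else 0)" for p
  define z :: vec where "z p = (if fst p = 0 \<and> 2 \<le> snd p then l2 ^ (snd p - 2) else 0)" for p
  have x2H: "x2 \<in> H2"
  proof (rule H2_seq[where \<phi> = "\<lambda>j. (j, 0)" and a = "\<lambda>j. l1 ^ j"])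
    show "inj (\<lambda>j::nat. (j, 0::nat))" by (simp add: inj_def)
    show "summable (\<lambda>j. (cmod (l1 ^ j))^2)" by (rule geo_sq_summable[OF l1])
    show "\<And>p. p \<notin> range (\<lambda>j. (j, 0)) \<Longrightarrow> x2 p = 0"
    proof -
      fix p :: "nat \<times> nat" assume "p \<notin> range (\<lambda>j. (j, 0::nat))"
      then have "snd p \<noteq> 0" by (cases p) auto
      then show "x2 p = 0" by (simp add: x2_def)
    qed
    show "\<And>j. x2 (j, 0) = l1 ^ j" by (simp add: x2_def)
  qed
  have zH: "z \<in> H2"
  proof (rule H2_seq[where \<phi> = "\<lambda>j. (0, j + 2)" and a = "\<lambda>j. l2 ^ j"])
    show "inj (\<lambda>j::nat. (0::nat, j + 2))" by (simp add: inj_def)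
    show "summable (\<lambda>j. (cmod (l2 ^ j))^2)" by (rule geo_sq_summable[OF l2])
    show "\<And>p. p \<notin> range (\<lambda>j. (0, j + 2)) \<Longrightarrow> z p = 0"
    proof -
      fix p :: "nat \<times> nat" assume a: "p \<notin> range (\<lambda>j. (0::nat, j + 2))"
      have "\<not> (fst p = 0 \<and> 2 \<le> snd p)"
      proof
        assume "fst p = 0 \<and> 2 \<le> snd p"
        then have "p = (\<lambda>j. (0::nat, j + 2)) (snd p - 2)" by (cases p) auto
        with a show False by blast
      qed
      then show "z p = 0" unfolding z_def by (rule if_not_P)
    qed
    show "\<And>j. z (0, j + 2) = l2 ^ j" by (simp add: z_def)
  qed
  have cyc: "kdelta2 (shiftop tau1 l1) (shiftop tau2 l2) (z, x2) = (\<lambda>_. 0)"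
  proof
    fix p :: "nat \<times> nat"
    obtain m1 m2 where p: "p = (m1, m2)" by (cases p)
    consider "m2 = 0" | "m2 \<noteq> 0 \<and> m2 \<le> m1" | "m2 = m1 + 1" | "m1 + 2 \<le> m2" by linarith
    then show "kdelta2 (shiftop tau1 l1) (shiftop tau2 l2) (z, x2) p = 0"
    proof cases
      case 1 then show ?thesis unfolding p
        by (simp add: kdelta2_def shiftop_def tau1_val tau2_val x2_def z_def)
    next
      case 2 then show ?thesis unfolding p
        by (simp add: kdelta2_def shiftop_def tau1_val tau2_val x2_def z_def) arith
    next
      case 3 then show ?thesis unfolding p
        by (simp add: kdelta2_def shiftop_def tau1_val tau2_val x2_def z_def)
    next
      case 4
      then obtain k where k: "m2 = k + 2" by (metis add.commute le_add2 le_add_diff_inverse le_trans)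
      show ?thesis using 4 unfolding p k
        by (simp add: kdelta2_def shiftop_def tau1_val tau2_val x2_def z_def)
    qed
  qed
  have notim: "(z, x2) \<notin> kdelta1 (shiftop tau1 l1) (shiftop tau2 l2) ` H2"
  proof
    assume "(z, x2) \<in> kdelta1 (shiftop tau1 l1) (shiftop tau2 l2) ` H2"
    then obtain h where h: "h \<in> H2" and Ah: "shiftop tau1 l1 h = z" by (auto simp: kdelta1_def)
    define q where "q n = (n, 2 * n + 2)" for n :: nat
    have e0: "- (l1 * h (q 0)) = 1"
      using fun_cong[OF Ah, of "(0, 2)"] by (simp add: shiftop_def tau1_val z_def q_def numeral_2_eq_2)
    have es: "h (q n) = l1 * h (q (Suc n))" for n
      using fun_cong[OF Ah, of "q (Suc n)"] by (simp add: shiftop_def tau1_val z_def q_def)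
    have ge: "1 \<le> cmod (h (q n))" for n
    proof (induction n)
      case 0
      have "cmod l1 * cmod (h (q 0)) = 1" using arg_cong[OF e0, of cmod] by (simp add: norm_mult)
      moreover have "cmod l1 * cmod (h (q 0)) \<le> 1 * cmod (h (q 0))"
        by (rule mult_right_mono) (use l1 in auto)
      ultimately show ?case by simp
    next
      case (Suc n)
      have "cmod (h (q n)) = cmod l1 * cmod (h (q (Suc n)))" using es[of n] by (simp add: norm_mult)
      also have "\<dots> \<le> cmod (h (q (Suc n)))" using l1 by (simp add: mult_left_le_one_le)
      finally show ?case using Suc.IH by linarith
    qed
    have injq: "inj q" by (auto simp: inj_def q_def)
    define N where "N = nat (ceiling (nrm h)) + 1"
    have "real N \<le> (\<Sum>n<N. (cmod (h (q n)))^2)"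
    proof -
      have "(\<Sum>n<N. (1::real)) \<le> (\<Sum>n<N. (cmod (h (q n)))^2)"
        by (intro sum_mono) (use ge in \<open>simp add: one_le_power\<close>)
      then show ?thesis by simp
    qed
    also have "\<dots> = (\<Sum>p\<in>q ` {..<N}. (cmod (h p))^2)"
      using injq by (subst sum.reindex) (auto intro: inj_on_subset)
    also have "\<dots> \<le> nrm h" by (rule H2_sum_le[OF h]) simp
    finally have "real N \<le> nrm h" .
    moreover have "nrm h < real N" unfolding N_def by linarith
    ultimately show False by linarith
  qed
  have "(z, x2) \<in> {p \<in> H2 \<times> H2. kdelta2 (shiftop tau1 l1) (shiftop tau2 l2) p = (\<lambda>_. 0)}"
    using cyc zH x2H by simp
  then have "kdelta1 (shiftop tau1 l1) (shiftop tau2 l2) ` H2 \<noteq> {p \<in> H2 \<times> H2. kdelta2 (shiftop tau1 l1) (shiftop tau2 l2) p = (\<lambda>_. 0)}"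
    using notim by blast
  then show ?thesis unfolding koszul_breaks_at_def by simp
qed


definition cc :: "nat \<Rightarrow> real" where "cc j = (real j + 1) powr (-3/4)"

lemma cc_pos: "0 < cc j" by (simp add: cc_def)

lemma cc_sq: "(cc j)^2 = (real (Suc j)) powr (-3/2)"
proof -
  have "(cc j)^2 = (real j + 1) powr (of_nat 2 * (-3/4))" unfolding cc_def
    by (subst powr_power) auto
  then show ?thesis by (simp add: add.commute)
qed

lemma cc_sq_summable: "summable (\<lambda>j. (cc j)^2)"
proof -
  have "summable (\<lambda>n. real n powr (-3/2))" by (simp add: summable_real_powr_iff)
  then have "summable (\<lambda>n. real (Suc n) powr (-3/2))" by (subst summable_Suc_iff)
  then show ?thesis by (simp add: cc_sq)
qed

lemma sum_cc_lower: assumes I: "0 < I" shows "real I powr (1/4) \<le> (\<Sum>j<I. cc j)"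
proof -
  have "(\<Sum>j<I. real I powr (-3/4)) \<le> (\<Sum>j<I. cc j)"
  proof (rule sum_mono)
    fix j assume "j \<in> {..<I}"
    then have "real j + 1 \<le> real I" by simp
    then show "real I powr (-3/4) \<le> cc j" unfolding cc_def by (intro powr_mono2') auto
  qed
  moreover have "(\<Sum>j<I. real I powr (-3/4)) = real I powr (1/4)"
  proof -
    have "(\<Sum>j<I. real I powr (-3/4)) = real I * real I powr (-3/4)" by simp
    also have "\<dots> = real I powr (1 + (-3/4))" by (rule powr_mult_base) simp
    finally show ?thesis by simp
  qed
  ultimately show ?thesis by simp
qed

lemma I_powr:
  assumes t: "0 < t"
  shows "real ((M + 1)^2 * t^4) powr (1/4) = sqrt (real M + 1) * real t"
proof -
  have "real ((M + 1)^2 * t^4) powr (1/4) = ((real M + 1)^2) powr (1/4) * ((real t)^4) powr (1/4)"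
    by (simp add: powr_mult add.commute)
  also have "((real M + 1)^2) powr (1/4) = (real M + 1) powr (1/2)"
  proof -
    have e: "(real M + 1) powr 2 = (real M + 1)^2" using powr_realpow[of "real M + 1" 2] by simp
    show ?thesis unfolding e[symmetric] powr_powr by simp
  qed
  also have "\<dots> = sqrt (real M + 1)" by (simp add: powr_half_sqrt)
  also have "((real t)^4) powr (1/4) = real t"
  proof -
    have e: "(real t) powr 4 = (real t)^4" using powr_realpow[of "real t" 4] t by simp
    show ?thesis unfolding e[symmetric] powr_powr using t by simp
  qed
  finally show ?thesis .
qed

lemma I_sqrt: "sqrt (real ((M + 1)^2 * t^4)) = (real M + 1) * (real t)^2"
proof -
  have "real ((M + 1)^2 * t^4) = ((real M + 1) * (real t)^2)^2" by (simp add: power_mult_distrib power_mult[symmetric])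
  then show ?thesis by simp
qed


lemma KL:
  fixes mu :: complex and W E :: "nat \<Rightarrow> nat \<Rightarrow> complex" and C D :: real
  assumes mu: "cmod mu = 1"
    and eq: "\<And>M j. mu^(Suc j) * complex_of_real (cc j) = W M (Suc j) - mu * W M j + E M j"
    and Wb: "\<And>M j. (cmod (W M j))^2 \<le> C * (real M + 1)"
    and eb: "\<And>N I. (\<Sum>M<N. \<Sum>j<I M. (cmod (E M j))^2) \<le> D"
  shows False
proof -
  have C0: "0 \<le> C"
  proof -
    have "(cmod (W 0 0))^2 \<le> C" using Wb[of 0 0] by simp
    moreover have "0 \<le> (cmod (W 0 0))^2" by (rule zero_le_power2)
    ultimately show ?thesis by linarith
  qed
  have mu0: "mu \<noteq> 0" using mu by auto
  have step1: "(\<Sum>j<I. cc j) \<le> cmod (W M I) + cmod (W M 0) + (\<Sum>j<I. cmod (E M j))" for M I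
  proof -
    define V where "V j = W M j / mu^j" for j
    have e: "complex_of_real (cc j) = V (Suc j) - V j + E M j / mu^(Suc j)" for j
    proof -
      have "complex_of_real (cc j) = (W M (Suc j) - mu * W M j + E M j) / mu^(Suc j)"
        using eq[of j M] mu0 by (simp add: nonzero_eq_divide_eq mult.commute)
      also have "\<dots> = V (Suc j) - V j + E M j / mu^(Suc j)"
        using mu0 by (simp add: V_def diff_divide_distrib add_divide_distrib)
      finally show ?thesis .
    qed
    have "complex_of_real (\<Sum>j<I. cc j) = (\<Sum>j<I. V (Suc j) - V j) + (\<Sum>j<I. E M j / mu^(Suc j))"
      by (simp add: e sum.distrib)
    also have "(\<Sum>j<I. V (Suc j) - V j) = V I - V 0" by (rule sum_lessThan_telescope)
    finally have ce: "complex_of_real (\<Sum>j<I. cc j) = V I - V 0 + (\<Sum>j<I. E M j / mu^(Suc j))" .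
    have "(\<Sum>j<I. cc j) = cmod (complex_of_real (\<Sum>j<I. cc j))"
      by (subst norm_of_real, rule abs_of_nonneg[symmetric], rule sum_nonneg) (simp add: less_imp_le cc_pos)
    also have "\<dots> = cmod (V I - V 0 + (\<Sum>j<I. E M j / mu^(Suc j)))" using ce by simp
    also have "\<dots> \<le> cmod (V I - V 0) + cmod (\<Sum>j<I. E M j / mu^(Suc j))" by (rule norm_triangle_ineq)
    also have "cmod (V I - V 0) \<le> cmod (V I) + cmod (V 0)" by (rule norm_triangle_ineq4)
    also have "cmod (\<Sum>j<I. E M j / mu^(Suc j)) \<le> (\<Sum>j<I. cmod (E M j / mu^(Suc j)))" by (rule norm_sum)
    also have "(\<Sum>j<I. cmod (E M j / mu^(Suc j))) = (\<Sum>j<I. cmod (E M j))"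
      by (simp only: norm_divide norm_power mu power_one div_by_1)
    also have "cmod (V I) = cmod (W M I)" by (simp only: V_def norm_divide norm_power mu power_one div_by_1)
    also have "cmod (V 0) = cmod (W M 0)" by (simp add: V_def)
    finally show ?thesis by simp
  qed
  have cs: "(\<Sum>j<I. cmod (E M j)) \<le> sqrt (real I * (\<Sum>j<I. (cmod (E M j))^2))" for M I
    using sum_squared_le_sum_of_squares[of "\<lambda>j. cmod (E M j)" "{..<I}"]
    by (intro real_le_rsqrt) (simp add: mult.commute)
  have Wb': "cmod (W M j) \<le> sqrt C * sqrt (real M + 1)" for M j
    using Wb[of M j] by (subst real_sqrt_mult[symmetric]) (rule real_le_rsqrt)
  define t :: nat where "t = nat (ceiling (2 * sqrt C)) + 1"
  have t1: "2 * sqrt C + 1 \<le> real t" unfolding t_def by linarith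
  have t0: "0 < t" by (simp add: t_def)
  define I where "I M = (M + 1)^2 * t^4" for M
  define s where "s M = (\<Sum>j<I M. (cmod (E M j))^2)" for M
  have s0: "0 \<le> s M" for M by (simp add: s_def sum_nonneg)
  have key: "1 / (real t^4 * (real M + 1)) \<le> s M" for M
  proof -
    define a where "a = sqrt (real M + 1)"
    have a0: "0 < a" by (simp add: a_def)
    define sg where "sg = sqrt (s M)"
    have sg0: "0 \<le> sg" using s0[of M] by (simp add: sg_def)
    have I0: "0 < I M" using t0 by (simp add: I_def)
    have lo: "a * real t \<le> (\<Sum>j<I M. cc j)"
      using sum_cc_lower[OF I0] I_powr[OF t0, of M] by (simp add: I_def a_def)
    have hi: "(\<Sum>j<I M. cc j) \<le> 2 * sqrt C * a + a^2 * (real t)^2 * sg"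
    proof -
      have "(\<Sum>j<I M. cc j) \<le> cmod (W M (I M)) + cmod (W M 0) + (\<Sum>j<I M. cmod (E M j))" by (rule step1)
      also have "\<dots> \<le> sqrt C * a + sqrt C * a + sqrt (real (I M) * s M)"
        using Wb'[of M "I M"] Wb'[of M 0] cs[of M "I M"] by (simp add: a_def s_def)
      also have "sqrt (real (I M) * s M) = a^2 * (real t)^2 * sg"
      proof -
        have "sqrt (real (I M) * s M) = sqrt (real (I M)) * sqrt (s M)" by (rule real_sqrt_mult)
        also have "sqrt (real (I M)) = (real M + 1) * (real t)^2" unfolding I_def by (rule I_sqrt)
        also have "real M + 1 = a^2" by (simp add: a_def)
        finally show ?thesis by (simp add: sg_def)
      qed
      finally show ?thesis by (simp add: mult.commute)
    qed
    have h1: "a * real t \<le> 2 * sqrt C * a + a^2 * (real t)^2 * sg" using lo hi by linarith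
    have "a * (2 * sqrt C + 1) \<le> a * real t" using t1 a0 by (intro mult_left_mono) auto
    then have h2: "a * 1 \<le> a * (a * (real t)^2 * sg)" using h1 by (simp add: algebra_simps power2_eq_square)
    have h3: "1 \<le> a * (real t)^2 * sg" using h2 a0 by (simp add: mult_le_cancel_left_pos)
    have h4: "1 \<le> (a * (real t)^2 * sg)^2" using h3 by (simp add: one_le_power)
    have "(a * (real t)^2 * sg)^2 = (real M + 1) * (real t)^4 * s M"
      by (simp add: power_mult_distrib a_def sg_def s0 power_mult[symmetric])
    then have h5: "1 \<le> (real t^4 * (real M + 1)) * s M" using h4 by (simp add: mult.commute mult.left_commute)
    have pos: "0 < real t^4 * (real M + 1)" using t0 by simp
    show ?thesis using h5 pos by (simp add: divide_le_eq mult.commute)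
  qed
  have hb: "(\<Sum>M<N. 1 / (real M + 1)) \<le> real t^4 * D" for N
  proof -
    have "(\<Sum>M<N. 1 / (real M + 1)) = real t^4 * (\<Sum>M<N. 1 / (real t^4 * (real M + 1)))"
      using t0 by (simp add: sum_distrib_left)
    also have "\<dots> \<le> real t^4 * (\<Sum>M<N. s M)"
      by (intro mult_left_mono sum_mono key) simp
    also have "(\<Sum>M<N. s M) \<le> D" unfolding s_def by (rule eb)
    then have "real t^4 * (\<Sum>M<N. s M) \<le> real t^4 * D" by (rule mult_left_mono) auto
    finally show ?thesis .
  qed
  have "summable (\<lambda>M. 1 / (real M + 1))"
    by (rule summableI_nonneg_bounded[where x = "real t^4 * D"]) (use hb in auto)
  then have "summable (\<lambda>n. inverse (real (Suc n)))" by (simp add: divide_inverse add.commute)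
  then have "summable (\<lambda>n. inverse (real n))" by (subst (asm) summable_Suc_iff)
  then show False using not_summable_harmonic by blast
qed


lemma sum1_le:
  assumes f: "f \<in> H2" and inj: "inj \<phi>" and A: "finite A"
  shows "(\<Sum>a\<in>A. (cmod (f (\<phi> a)))^2) \<le> nrm f"
proof -
  have "(\<Sum>a\<in>A. (cmod (f (\<phi> a)))^2) = (\<Sum>q\<in>\<phi> ` A. (cmod (f q))^2)"
    using inj by (subst sum.reindex) (auto intro: inj_on_subset)
  also have "\<dots> \<le> nrm f" using A by (intro H2_sum_le[OF f]) simp
  finally show ?thesis .
qed

lemma sum2_le:
  fixes N :: nat and I :: "nat \<Rightarrow> nat" and \<phi> :: "nat \<Rightarrow> nat \<Rightarrow> nat \<times> nat"
  assumes f: "f \<in> H2" and inj: "\<And>a b a' b'. \<phi> a b = \<phi> a' b' \<Longrightarrow> a = a' \<and> b = b'"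
  shows "(\<Sum>M<N. \<Sum>j<I M. (cmod (f (\<phi> M j)))^2) \<le> nrm f"
proof -
  have "(\<Sum>M<N. \<Sum>j<I M. (cmod (f (\<phi> M j)))^2) = (\<Sum>(M, j)\<in>Sigma {..<N} (\<lambda>M. {..<I M}). (cmod (f (\<phi> M j)))^2)"
    by (rule sum.Sigma) auto
  also have "\<dots> = (\<Sum>x\<in>Sigma {..<N} (\<lambda>M. {..<I M}). (cmod (f (case_prod \<phi> x)))^2)"
    by (rule sum.cong) auto
  also have "\<dots> \<le> nrm f"
    by (rule sum1_le[OF f]) (auto simp: inj_def dest: inj)
  finally show ?thesis .
qed

lemma tel:
  fixes l :: complex
  shows "(\<Sum>a<Suc M. l^a * ((if a = 0 then 0 else x (a - 1)) - l * x a)) = - (l^Suc M * x M)"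
proof (induction M)
  case 0 then show ?case by simp
next
  case (Suc M)
  have "(\<Sum>a<Suc (Suc M). l^a * ((if a = 0 then 0 else x (a - 1)) - l * x a))
      = - (l^Suc M * x M) + l^Suc M * (x M - l * x (Suc M))"
    using Suc.IH by simp
  also have "\<dots> = - (l^Suc (Suc M) * x (Suc M))" by (simp add: algebra_simps)
  finally show ?case .
qed

lemma Wbound:
  fixes l :: complex
  assumes l: "cmod l \<le> 1" and f: "f \<in> H2" and inj: "inj \<phi>"
  shows "(cmod (\<Sum>a<Suc M. l^a * f (\<phi> a)))^2 \<le> nrm f * (real M + 1)"
proof -
  have "cmod (\<Sum>a<Suc M. l^a * f (\<phi> a)) \<le> (\<Sum>a<Suc M. cmod (l^a * f (\<phi> a)))" by (rule norm_sum)
  also have "\<dots> \<le> (\<Sum>a<Suc M. cmod (f (\<phi> a)))"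
  proof (rule sum_mono)
    fix a
    have "cmod (l^a) \<le> 1" using l by (simp add: norm_power power_le_one)
    then show "cmod (l^a * f (\<phi> a)) \<le> cmod (f (\<phi> a))"
      by (simp add: norm_mult mult_left_le_one_le)
  qed
  finally have n: "cmod (\<Sum>a<Suc M. l^a * f (\<phi> a)) \<le> (\<Sum>a<Suc M. cmod (f (\<phi> a)))" .
  have "(cmod (\<Sum>a<Suc M. l^a * f (\<phi> a)))^2 \<le> (\<Sum>a<Suc M. cmod (f (\<phi> a)))^2"
    using n by (intro power_mono) auto
  also have "\<dots> \<le> (\<Sum>a<Suc M. (cmod (f (\<phi> a)))^2) * real (card {..<Suc M})"
    by (rule sum_squared_le_sum_of_squares)
  also have "\<dots> \<le> nrm f * (real M + 1)"
  proof -
    have a: "(\<Sum>a<Suc M. (cmod (f (\<phi> a)))^2) \<le> nrm f" by (rule sum1_le[OF f inj]) simp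
    have "(\<Sum>a<Suc M. (cmod (f (\<phi> a)))^2) * real (card {..<Suc M}) \<le> nrm f * real (card {..<Suc M})"
      by (rule mult_right_mono[OF a]) simp
    then show ?thesis unfolding card_lessThan of_nat_Suc by (metis add.commute)
  qed
  finally show ?thesis .
qed

lemma breaks3I:
  assumes "g \<in> H2" "g \<notin> kdelta2 A B ` (H2 \<times> H2)"
  shows "koszul_breaks_at H2 A B 3"
  using assms unfolding koszul_breaks_at_def by auto


lemma eb_bound:
  fixes l :: complex and \<phi> :: "nat \<Rightarrow> nat \<Rightarrow> nat \<times> nat" and I :: "nat \<Rightarrow> nat"
  assumes l: "cmod l \<le> 1" and f: "f \<in> H2" and inj: "\<And>a b a' b'. \<phi> a b = \<phi> a' b' \<Longrightarrow> a = a' \<and> b = b'"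
  shows "(\<Sum>M<N. \<Sum>j<I M. (cmod (l^Suc M * f (\<phi> M j)))^2) \<le> nrm f"
proof -
  have "(\<Sum>M<N. \<Sum>j<I M. (cmod (l^Suc M * f (\<phi> M j)))^2) \<le> (\<Sum>M<N. \<Sum>j<I M. (cmod (f (\<phi> M j)))^2)"
  proof (intro sum_mono)
    fix M j
    have "cmod (l^Suc M) \<le> 1" unfolding norm_power using l by (intro power_le_one) auto
    then have "cmod (l^Suc M * f (\<phi> M j)) \<le> cmod (f (\<phi> M j))"
      by (simp add: norm_mult mult_left_le_one_le)
    then show "(cmod (l^Suc M * f (\<phi> M j)))^2 \<le> (cmod (f (\<phi> M j)))^2"
      by (intro power_mono) auto
  qed
  also have "\<dots> \<le> nrm f" by (rule sum2_le[OF f inj])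
  finally show ?thesis .
qed

lemma sum_delta0: "(\<Sum>a<Suc M. (l::complex)^a * (if a = 0 then c else 0)) = c"
proof -
  have "(\<Sum>a<Suc M. l^a * (if a = 0 then c else 0)) = (\<Sum>a<Suc M. if a = 0 then c else 0)"
    by (rule sum.cong) auto
  also have "\<dots> = c" by (simp add: sum.delta)
  finally show ?thesis .
qed

lemma boundary_l2:
  assumes l1: "cmod l1 \<le> 1" and l2: "cmod l2 = 1"
  shows "koszul_breaks_at H2 (shiftop tau1 l1) (shiftop tau2 l2) 3"
proof -
  define g :: vec where "g p = (if fst p = 0 \<and> 2 \<le> snd p then - (l2^(snd p - 1) * complex_of_real (cc (snd p - 2))) else 0)" for p
  have gH: "g \<in> H2"
  proof (rule H2_seq[where \<phi> = "\<lambda>j. (0, j + 2)" and a = "\<lambda>j. - (l2^Suc j * complex_of_real (cc j))"])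
    show "inj (\<lambda>j::nat. (0::nat, j + 2))" by (simp add: inj_def)
    show "summable (\<lambda>j. (cmod (- (l2^Suc j * complex_of_real (cc j))))^2)"
      using cc_sq_summable by (simp add: norm_mult norm_power l2)
    show "\<And>p. p \<notin> range (\<lambda>j. (0, j + 2)) \<Longrightarrow> g p = 0"
    proof -
      fix p :: "nat \<times> nat" assume a: "p \<notin> range (\<lambda>j. (0::nat, j + 2))"
      have "\<not> (fst p = 0 \<and> 2 \<le> snd p)"
      proof
        assume "fst p = 0 \<and> 2 \<le> snd p"
        then have "p = (\<lambda>j. (0::nat, j + 2)) (snd p - 2)" by (cases p) auto
        with a show False by blast
      qed
      then show "g p = 0" unfolding g_def by (rule if_not_P)
    qed
    show "\<And>j. g (0, j + 2) = - (l2^Suc j * complex_of_real (cc j))" by (simp add: g_def)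
  qed
  define p where "p a j = (a, 2 * a + 2 + j)" for a j :: nat
  have t1p: "tau1 f (p a j) = (if a = 0 then 0 else f (p (a - 1) j))" for f a j
    by (cases a) (simp_all add: p_def tau1_val)
  have t2p: "tau2 f (p a j) = f (p a (Suc j))" for f a j
    by (simp add: p_def tau2_val)
  have gp: "g (p a j) = (if a = 0 then - (l2^Suc j * complex_of_real (cc j)) else 0)" for a j
    by (simp add: p_def g_def)
  have injp: "\<And>a b a' b'. p a b = p a' b' \<Longrightarrow> a = a' \<and> b = b'" by (simp add: p_def)
  have notin: "g \<notin> kdelta2 (shiftop tau1 l1) (shiftop tau2 l2) ` (H2 \<times> H2)"
  proof
    assume "g \<in> kdelta2 (shiftop tau1 l1) (shiftop tau2 l2) ` (H2 \<times> H2)"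
    then obtain h1 h2 where h1: "h1 \<in> H2" and h2: "h2 \<in> H2"
      and ge: "g = kdelta2 (shiftop tau1 l1) (shiftop tau2 l2) (h1, h2)" by auto
    have E: "g (p a j) = ((if a = 0 then 0 else h2 (p (a - 1) j)) - l1 * h2 (p a j)) - (h1 (p a (Suc j)) - l2 * h1 (p a j))" for a j
      using fun_cong[OF ge, of "p a j"] by (simp add: kdelta2_def shiftop_def t1p t2p)
    define W where "W M j = (\<Sum>a<Suc M. l1^a * h1 (p a j))" for M j
    define E' where "E' M j = l1^Suc M * h2 (p M j)" for M j
    have key: "l2^Suc j * complex_of_real (cc j) = W M (Suc j) - l2 * W M j + E' M j" for M j
    proof -
      have "- (l2^Suc j * complex_of_real (cc j)) = (\<Sum>a<Suc M. l1^a * g (p a j))"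
        unfolding gp by (rule sum_delta0[symmetric])
      also have "\<dots> = (\<Sum>a<Suc M. l1^a * ((if a = 0 then 0 else h2 (p (a - 1) j)) - l1 * h2 (p a j)))
                      - (\<Sum>a<Suc M. l1^a * (h1 (p a (Suc j)) - l2 * h1 (p a j)))"
        unfolding E by (simp add: right_diff_distrib sum_subtractf)
      also have "(\<Sum>a<Suc M. l1^a * ((if a = 0 then 0 else h2 (p (a - 1) j)) - l1 * h2 (p a j)))
                  = - (l1^Suc M * h2 (p M j))"
        by (rule tel)
      also have "(\<Sum>a<Suc M. l1^a * (h1 (p a (Suc j)) - l2 * h1 (p a j))) = W M (Suc j) - l2 * W M j"
        by (simp add: W_def right_diff_distrib sum_subtractf sum_distrib_left algebra_simps)
      finally show ?thesis by (simp add: E'_def algebra_simps)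
    qed
    show False
    proof (rule KL[where mu = l2 and W = W and E = E' and C = "nrm h1" and D = "nrm h2"])
      show "cmod l2 = 1" by (rule l2)
      show "\<And>M j. l2^Suc j * complex_of_real (cc j) = W M (Suc j) - l2 * W M j + E' M j" by (rule key)
      show "\<And>M j. (cmod (W M j))^2 \<le> nrm h1 * (real M + 1)"
        unfolding W_def by (rule Wbound[OF l1 h1]) (simp add: inj_def p_def)
      show "\<And>N I. (\<Sum>M<N. \<Sum>j<I M. (cmod (E' M j))^2) \<le> nrm h2"
        unfolding E'_def by (rule eb_bound[OF l1 h2 injp])
    qed
  qed
  show ?thesis by (rule breaks3I[OF gH notin])
qed


lemma boundary_l1:
  assumes l1: "cmod l1 = 1" and l2: "cmod l2 \<le> 1"
  shows "koszul_breaks_at H2 (shiftop tau1 l1) (shiftop tau2 l2) 3"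
proof -
  define g :: vec where "g p = (if snd p = 0 then l1^Suc (fst p) * complex_of_real (cc (fst p)) else 0)" for p
  have gH: "g \<in> H2"
  proof (rule H2_seq[where \<phi> = "\<lambda>i. (i, 0)" and a = "\<lambda>i. l1^Suc i * complex_of_real (cc i)"])
    show "inj (\<lambda>i::nat. (i, 0::nat))" by (simp add: inj_def)
    show "summable (\<lambda>i. (cmod (l1^Suc i * complex_of_real (cc i)))^2)"
      using cc_sq_summable by (simp add: norm_mult norm_power l1)
    show "\<And>p. p \<notin> range (\<lambda>i. (i, 0)) \<Longrightarrow> g p = 0"
    proof -
      fix p :: "nat \<times> nat" assume a: "p \<notin> range (\<lambda>i. (i, 0::nat))"
      have "snd p \<noteq> 0"
      proof
        assume "snd p = 0"
        then have "p = (\<lambda>i. (i, 0::nat)) (fst p)" by (cases p) auto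
        with a show False by blast
      qed
      then show "g p = 0" unfolding g_def by (rule if_not_P)
    qed
    show "\<And>i. g (i, 0) = l1^Suc i * complex_of_real (cc i)" by (simp add: g_def)
  qed
  define q where "q i k = (i + 2 * k, k)" for i k :: nat
  have t1q: "tau1 f (q i k) = f (q (Suc i) k)" for f i k
    by (simp add: q_def tau1_val)
  have t2q: "tau2 f (q i k) = (if k = 0 then 0 else f (q i (k - 1)))" for f i k
    by (cases k) (simp_all add: q_def tau2_val)
  have gq: "g (q i k) = (if k = 0 then l1^Suc i * complex_of_real (cc i) else 0)" for i k
    by (simp add: q_def g_def)
  have injq: "\<And>a b a' b'. q b a = q b' a' \<Longrightarrow> a = a' \<and> b = b'" by (simp add: q_def)
  have notin: "g \<notin> kdelta2 (shiftop tau1 l1) (shiftop tau2 l2) ` (H2 \<times> H2)"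
  proof
    assume "g \<in> kdelta2 (shiftop tau1 l1) (shiftop tau2 l2) ` (H2 \<times> H2)"
    then obtain h1 h2 where h1: "h1 \<in> H2" and h2: "h2 \<in> H2"
      and ge: "g = kdelta2 (shiftop tau1 l1) (shiftop tau2 l2) (h1, h2)" by auto
    have E: "g (q i k) = (h2 (q (Suc i) k) - l1 * h2 (q i k)) - ((if k = 0 then 0 else h1 (q i (k - 1))) - l2 * h1 (q i k))" for i k
      using fun_cong[OF ge, of "q i k"] by (simp add: kdelta2_def shiftop_def t1q t2q)
    define W where "W K i = (\<Sum>k<Suc K. l2^k * h2 (q i k))" for K i
    define E' where "E' K i = l2^Suc K * h1 (q i K)" for K i
    have key: "l1^Suc i * complex_of_real (cc i) = W K (Suc i) - l1 * W K i + E' K i" for K i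
    proof -
      have "l1^Suc i * complex_of_real (cc i) = (\<Sum>k<Suc K. l2^k * g (q i k))"
        unfolding gq by (rule sum_delta0[symmetric])
      also have "\<dots> = (\<Sum>k<Suc K. l2^k * (h2 (q (Suc i) k) - l1 * h2 (q i k)))
                      - (\<Sum>k<Suc K. l2^k * ((if k = 0 then 0 else h1 (q i (k - 1))) - l2 * h1 (q i k)))"
        unfolding E by (simp add: right_diff_distrib sum_subtractf)
      also have "(\<Sum>k<Suc K. l2^k * ((if k = 0 then 0 else h1 (q i (k - 1))) - l2 * h1 (q i k)))
                  = - (l2^Suc K * h1 (q i K))"
        by (rule tel)
      also have "(\<Sum>k<Suc K. l2^k * (h2 (q (Suc i) k) - l1 * h2 (q i k))) = W K (Suc i) - l1 * W K i"
        by (simp add: W_def right_diff_distrib sum_subtractf sum_distrib_left algebra_simps)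
      finally show ?thesis by (simp add: E'_def algebra_simps)
    qed
    show False
    proof (rule KL[where mu = l1 and W = W and E = E' and C = "nrm h2" and D = "nrm h1"])
      show "cmod l1 = 1" by (rule l1)
      show "\<And>M j. l1^Suc j * complex_of_real (cc j) = W M (Suc j) - l1 * W M j + E' M j" by (rule key)
      show "\<And>M j. (cmod (W M j))^2 \<le> nrm h2 * (real M + 1)"
        unfolding W_def by (rule Wbound[OF l2 h2]) (simp add: inj_def q_def)
      show "\<And>N I. (\<Sum>M<N. \<Sum>j<I M. (cmod (E' M j))^2) \<le> nrm h1"
        unfolding E'_def by (rule eb_bound[OF l2 h1, where \<phi> = "\<lambda>K i. q i K"]) (use injq in blast)
    qed
  qed
  show ?thesis by (rule breaks3I[OF gH notin])
qed


theorem proposition3p4: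
  shows "taylor_spectrum H2 tau1 tau2 = cball 0 1 \<times> cball 0 1
    \<and> (\<forall>l1 l2. cmod l1 < 1 \<and> cmod l2 < 1 \<longrightarrow>
          koszul_breaks_at H2 (shiftop tau1 l1) (shiftop tau2 l2) 2)"
proof
  show "\<forall>l1 l2. cmod l1 < 1 \<and> cmod l2 < 1 \<longrightarrow>
          koszul_breaks_at H2 (shiftop tau1 l1) (shiftop tau2 l2) 2"
    using interior_break by blast
  show "taylor_spectrum H2 tau1 tau2 = cball 0 1 \<times> cball 0 1"
  proof (rule set_eqI)
    fix x :: "complex \<times> complex"
    obtain l1 l2 where x: "x = (l1, l2)" by (cases x)
    have mem: "(x \<in> cball 0 1 \<times> cball 0 1) = (cmod l1 \<le> 1 \<and> cmod l2 \<le> 1)"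
      by (simp add: x)
    have ts: "(x \<in> taylor_spectrum H2 tau1 tau2) = (\<not> koszul_exact H2 (shiftop tau1 l1) (shiftop tau2 l2))"
      by (simp add: taylor_spectrum_def x)
    show "(x \<in> taylor_spectrum H2 tau1 tau2) = (x \<in> cball 0 1 \<times> cball 0 1)"
    proof (cases "cmod l1 \<le> 1 \<and> cmod l2 \<le> 1")
      case True
      have "\<exists>n. koszul_breaks_at H2 (shiftop tau1 l1) (shiftop tau2 l2) n"
      proof (cases "cmod l1 < 1 \<and> cmod l2 < 1")
        case True
        then show ?thesis using interior_break by blast
      next
        case False
        show ?thesis
        proof (cases "cmod l2 = 1")
          case True
          then show ?thesis using boundary_l2 \<open>cmod l1 \<le> 1 \<and> cmod l2 \<le> 1\<close> by blast
        next
          case c2: False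
          then have "cmod l1 = 1" using False \<open>cmod l1 \<le> 1 \<and> cmod l2 \<le> 1\<close> by linarith
          then show ?thesis using boundary_l1 \<open>cmod l1 \<le> 1 \<and> cmod l2 \<le> 1\<close> by blast
        qed
      qed
      then have "\<not> koszul_exact H2 (shiftop tau1 l1) (shiftop tau2 l2)"
        unfolding koszul_exact_def by blast
      then show ?thesis using ts mem True by simp
    next
      case False
      then have "1 < cmod l1 \<or> 1 < cmod l2" by linarith
      then have "koszul_exact H2 (shiftop tau1 l1) (shiftop tau2 l2)" by (rule exterior)
      then show ?thesis using ts mem False by simp
    qed
  qed
qed

end
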